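(* Consider the problem $\mathbf{x}^\star(t)=\arg\min_{\mathbf{x}\in\mathbb{R}^n} f_0(\mathbf{x},t)$ s.t. $f_i(\mathbf{x},t)\le0$, $i=1,\dots,p$, for $t\in[0,\infty)$, under Assumptions 1, 2, 3 below. Let $\mathbf{x}_0\in\mathbb{R}^n$ be arbitrary, let $s_0$ be given by $$s_0=\begin{cases}0 & \text{if } \max_i f_i(\mathbf{x}_0,0)\le 0,\\ \max_i f_i(\mathbf{x}_0,0)+\varepsilon & \text{if } \max_i f_i(\mathbf{x}_0,0)>0,\end{cases}$$ for some $\varepsilon>0$, and let $s(t)=s_0e^{-\alpha t}$ for some $\alpha>0$. Let $c:[0,\infty)\to(0,\infty)$ be continuously differentiable with $c(t)\to\infty$ as $t\to\infty$. Let $\mathbf{P}\in\mathbb{S}^n_{++}$ with $\mathbf{P}\succeq\sigma\mathbf{I}_n$, $\sigma>0$, and let $\tilde{\mathbf{z}}(t)$ solve $$\dot{\tilde{\mathbf{z}}}(t)=-\nabla_{\mathbf{x}\mathbf{x}}\tilde\Phi(\tilde{\mathbf{z}}(t),t)^{-1}\big(\mathbf{P}\nabla_{\mathbf{x}}\tilde\Phi(\tilde{\mathbf{z}}(t),t)+\nabla_{\mathbf{x}t}\tilde\Phi(\tilde{\mathbf{z}}(t),t)\big),\qquad\tilde{\mathbf{z}}(0)=\mathbf{x}_0,$$ where $\tilde\Phi(\mathbf{x},t)=f_0(\mathbf{x},t)-\frac{1}{c(t)}\sum_{i=1}^p\log(s(t)-f_i(\mathbf{x},t))$ on $\tilde{\mathcal{D}}(t)=\{\mathbf{x}: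 f_i(\mathbf{x},t)<s(t),\ i=1,\dots,p\}$. Then $\tilde{\mathbf{z}}(t)-\mathbf{x}^\star(t)\to 0$ as $t\to\infty$.
   Context: Assumption 1: $f_0(\mathbf{x},t)$ and $f_i(\mathbf{x},t)$, $i=1,\dots,p$, are twice continuously differentiable in $\mathbf{x}$ and continuously differentiable in $t$ for $t\ge0$; $\nabla_{\mathbf{x}\mathbf{x}} f_0(\mathbf{x},t)\succeq m\mathbf{I}$ for some $m>0$; each $f_i(\cdot,t)$ is convex for all $t\ge0$. Assumption 2 (Slater): there exists $\mathbf{x}^\dagger\in\mathbb{R}^n$ with $f_i(\mathbf{x}^\dagger,t)<0$ for all $i$ and all $t\ge0$. Optimal dual variables $\lambda^\star(t)=(\lambda_1^\star(t),\dots,\lambda_p^\star(t))$ satisfy with $\mathbf{x}^\star(t)$ the KKT conditions: $\nabla_{\mathbf{x}} f_0(\mathbf{x}^\star(t),t)+\sum_i\lambda_i^\star(t)\nabla_{\mathbf{x}} f_i(\mathbf{x}^\star(t),t)=0$, $\lambda_i^\star(t)f_i(\mathbf{x}^\star(t),t)=0$, $\lambda_i^\star(t)\ge0$, $f_i(\mathbf{x}^\star(t),t)\le0$. Assumption 3: for every $\alpha>0$, $\lambda_i^\star(t)e^{-\alpha t}\to0$ as $t\to\infty$ for all $i$. The solution $\tilde{\mathbf{z}}(t)$ is assumed to exist and remain in $\tilde{\mathcal{D}}(t)$ for all $t\ge0$. *)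

theory Defs
  imports "HOL-Analysis.Analysis"
begin

definition grad_x :: "(real^'n \<Rightarrow> real) \<Rightarrow> real^'n \<Rightarrow> real^'n" where
  "grad_x F x = (\<chi> j. frechet_derivative F (at x) (axis j 1))"

definition hess_x :: "(real^'n \<Rightarrow> real) \<Rightarrow> real^'n \<Rightarrow> real^'n^'n" where
  "hess_x F x = (\<chi> i j. frechet_derivative (\<lambda>y. grad_x F y $ i) (at x) (axis j 1))"

definition tderiv :: "(real \<Rightarrow> real) \<Rightarrow> real \<Rightarrow> real" where
  "tderiv g t = (THE d. (g has_real_derivative d) (at t within {0..}))"

definition grad_xt :: "(real^'n \<Rightarrow> real \<Rightarrow> real) \<Rightarrow> real^'n \<Rightarrow> real \<Rightarrow> real^'n" where
  "grad_xt F x t = (\<chi> i. tderiv (\<lambda>s. grad_x (\<lambda>y. F y s) x $ i) t)"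

definition C2_x :: "(real^'n \<Rightarrow> real) \<Rightarrow> bool" where
  "C2_x F \<longleftrightarrow> (\<forall>x. F differentiable (at x)) \<and>
     (\<forall>i x. (\<lambda>y. grad_x F y $ i) differentiable (at x)) \<and>
     continuous_on UNIV (hess_x F)"

definition C1_t :: "(real \<Rightarrow> real) \<Rightarrow> bool" where
  "C1_t g \<longleftrightarrow> (\<exists>D. (\<forall>t\<ge>0. (g has_real_derivative D t) (at t within {0..})) \<and>
                    continuous_on {0..} D)"

text \<open>Joint regularity in (x,t) implicit in Assumption 1 (needed for the mixed
  derivative in the ODE to make sense): jointly continuous function, gradient jointly
  differentiable, and Hessian, time derivative and mixed derivative jointly continuous.\<close>
definition joint_regular :: "(real^'n \<Rightarrow> real \<Rightarrow> real) \<Rightarrow> bool" where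
  "joint_regular F \<longleftrightarrow>
     continuous_on (UNIV \<times> {0..}) (\<lambda>(x,t). F x t) \<and>
     (\<forall>j x t. t \<ge> 0 \<longrightarrow> (\<lambda>(y,s). grad_x (\<lambda>z. F z s) y $ j)
          differentiable (at (x,t) within UNIV \<times> {0..})) \<and>
     continuous_on (UNIV \<times> {0..}) (\<lambda>(x,t). hess_x (\<lambda>y. F y t) x) \<and>
     continuous_on (UNIV \<times> {0..}) (\<lambda>(x,t). tderiv (\<lambda>s. F x s) t) \<and>
     continuous_on (UNIV \<times> {0..}) (\<lambda>(x,t). grad_xt F x t)"

definition assm1_smooth :: "(real^'n \<Rightarrow> real \<Rightarrow> real) \<Rightarrow> bool" where
  "assm1_smooth F \<longleftrightarrow> (\<forall>t\<ge>0. C2_x (\<lambda>x. F x t)) \<and> (\<forall>x. C1_t (\<lambda>t. F x t)) \<and> joint_regular F"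

end

theory Submission
  imports Defs
begin

lemma vec_has_derivative:
  fixes f :: "'a::real_normed_vector \<Rightarrow> real^'n"
  assumes "\<And>i. ((\<lambda>x. f x $ i) has_derivative (\<lambda>h. f' h $ i)) (at a within S)"
  shows "(f has_derivative f') (at a within S)"
  using assms unfolding has_derivative_componentwise_within[of f f' a S]
  by (auto simp: Basis_vec_def inner_axis)

lemma lin_expand:
  fixes L :: "real^'n \<Rightarrow> real"
  assumes "linear L"
  shows "L v = (\<Sum>j\<in>UNIV. v$j * L (axis j 1))"
proof -
  have "L v = L (\<Sum>j\<in>UNIV. v$j *\<^sub>R axis j 1)"
    using basis_expansion[of v] by (simp add: scalar_mult_eq_scaleR)
  also have "\<dots> = (\<Sum>j\<in>UNIV. v$j * L (axis j 1))"
    using assms by (simp add: linear_sum linear_scale)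
  finally show ?thesis .
qed

lemma grad_deriv:
  assumes "F differentiable (at x)"
  shows "(F has_derivative (\<lambda>h. grad_x F x \<bullet> h)) (at x)"
proof -
  have d: "(F has_derivative frechet_derivative F (at x)) (at x)"
    using assms frechet_derivative_works by blast
  have l: "linear (frechet_derivative F (at x))"
    using d has_derivative_linear by blast
  have "frechet_derivative F (at x) = (\<lambda>h. grad_x F x \<bullet> h)"
    by (rule ext, subst lin_expand[OF l]) (simp add: grad_x_def inner_vec_def mult.commute)
  then show ?thesis using d by simp
qed

lemma grad_eq:
  assumes "(F has_derivative (\<lambda>h. g \<bullet> h)) (at x)"
  shows "grad_x F x = g"
proof -
  have "frechet_derivative F (at x) = (\<lambda>h. g \<bullet> h)"
    using frechet_derivative_at[OF assms] by simp
  then show ?thesis unfolding grad_x_def by (simp add: vec_eq_iff inner_axis)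
qed

lemma hess_deriv:
  assumes "C2_x F"
  shows "((\<lambda>y. grad_x F y) has_derivative (\<lambda>h. hess_x F x *v h)) (at x)"
proof (rule vec_has_derivative)
  fix i
  have d: "((\<lambda>y. grad_x F y $ i) has_derivative frechet_derivative (\<lambda>y. grad_x F y $ i) (at x)) (at x)"
    using assms frechet_derivative_works unfolding C2_x_def by blast
  have l: "linear (frechet_derivative (\<lambda>y. grad_x F y $ i) (at x))"
    using d has_derivative_linear by blast
  have "frechet_derivative (\<lambda>y. grad_x F y $ i) (at x) = (\<lambda>h. (hess_x F x *v h) $ i)"
    by (rule ext, subst lin_expand[OF l]) (simp add: hess_x_def matrix_vector_mult_def mult.commute)
  then show "((\<lambda>y. grad_x F y $ i) has_derivative (\<lambda>h. (hess_x F x *v h) $ i)) (at x)"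
    using d by simp
qed


lemma line_deriv1:
  assumes "\<forall>y. F differentiable (at y)"
  shows "((\<lambda>h. F (x + h *\<^sub>R v)) has_real_derivative (grad_x F (x + \<tau> *\<^sub>R v) \<bullet> v)) (at \<tau>)"
proof -
  have l: "((\<lambda>h. x + h *\<^sub>R v) has_derivative (\<lambda>h. h *\<^sub>R v)) (at \<tau>)"
    by (auto intro!: derivative_eq_intros)
  have "((\<lambda>h. F (x + h *\<^sub>R v)) has_derivative (\<lambda>h. grad_x F (x + \<tau> *\<^sub>R v) \<bullet> (h *\<^sub>R v))) (at \<tau>)"
    using diff_chain_at[OF l grad_deriv[OF assms[rule_format]]] by (simp add: o_def)
  then show ?thesis unfolding has_field_derivative_def by (simp add: mult_commute_abs)
qed

lemma line_deriv2:
  assumes "C2_x F"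
  shows "((\<lambda>h. grad_x F (x + h *\<^sub>R v) \<bullet> v) has_real_derivative (v \<bullet> (hess_x F (x + \<tau> *\<^sub>R v) *v v))) (at \<tau>)"
proof -
  have l: "((\<lambda>h. x + h *\<^sub>R v) has_derivative (\<lambda>h. h *\<^sub>R v)) (at \<tau>)"
    by (auto intro!: derivative_eq_intros)
  have "((\<lambda>h. grad_x F (x + h *\<^sub>R v)) has_derivative (\<lambda>h. hess_x F (x + \<tau> *\<^sub>R v) *v (h *\<^sub>R v))) (at \<tau>)"
    using diff_chain_at[OF l hess_deriv[OF assms]] by (simp add: o_def)
  then have "((\<lambda>h. grad_x F (x + h *\<^sub>R v) \<bullet> v) has_derivative (\<lambda>h. (hess_x F (x + \<tau> *\<^sub>R v) *v (h *\<^sub>R v)) \<bullet> v)) (at \<tau>)"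
    by (auto intro!: derivative_eq_intros)
  then have "((\<lambda>h. grad_x F (x + h *\<^sub>R v) \<bullet> v) has_derivative (\<lambda>h. h * (v \<bullet> (hess_x F (x + \<tau> *\<^sub>R v) *v v)))) (at \<tau>)"
    by (simp add: matrix_vector_mult_scaleR inner_commute)
  then show ?thesis unfolding has_field_derivative_def
    by (simp add: mult_commute_abs)
qed

lemma strong_conv:
  assumes C: "C2_x F" and m: "\<forall>x v. v \<bullet> (hess_x F x *v v) \<ge> m * (v \<bullet> v)"
  shows "F y \<ge> F x + grad_x F x \<bullet> (y - x) + m / 2 * ((y - x) \<bullet> (y - x))"
proof -
  define v where "v = y - x"
  have dF: "\<forall>y. F differentiable (at y)" using C unfolding C2_x_def by blast
  define \<psi> where "\<psi> h = grad_x F (x + h *\<^sub>R v) \<bullet> v" for h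
  have mono: "\<psi> 0 + m * \<tau> * (v \<bullet> v) \<le> \<psi> \<tau>" if "0 \<le> \<tau>" for \<tau>
  proof -
    have "(\<lambda>h. \<psi> h - m * h * (v \<bullet> v)) 0 \<le> (\<lambda>h. \<psi> h - m * h * (v \<bullet> v)) \<tau>"
    proof (rule DERIV_nonneg_imp_nondecreasing[OF that])
      fix h
      have "((\<lambda>h. \<psi> h - m * h * (v \<bullet> v)) has_real_derivative
              (v \<bullet> (hess_x F (x + h *\<^sub>R v) *v v) - m * (v \<bullet> v))) (at h)"
        unfolding \<psi>_def using line_deriv2[OF C, of x v h]
        by (auto intro!: derivative_eq_intros)
      then show "\<exists>y. ((\<lambda>h. \<psi> h - m * h * (v \<bullet> v)) has_real_derivative y) (at h) \<and> 0 \<le> y"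
        using m by (intro exI[of _ "v \<bullet> (hess_x F (x + h *\<^sub>R v) *v v) - m * (v \<bullet> v)"]) auto
    qed
    then show ?thesis by simp
  qed
  have "(\<lambda>h. F (x + h *\<^sub>R v) - h * \<psi> 0 - m / 2 * h^2 * (v \<bullet> v)) 0
        \<le> (\<lambda>h. F (x + h *\<^sub>R v) - h * \<psi> 0 - m / 2 * h^2 * (v \<bullet> v)) 1"
  proof (rule DERIV_nonneg_imp_nondecreasing[of 0 1])
    fix h :: real assume h: "0 \<le> h" "h \<le> 1"
    have "((\<lambda>h. F (x + h *\<^sub>R v) - h * \<psi> 0 - m / 2 * h^2 * (v \<bullet> v)) has_real_derivative
            (\<psi> h - \<psi> 0 - m * h * (v \<bullet> v))) (at h)"
      unfolding \<psi>_def using line_deriv1[OF dF, of x v h]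
      by (auto intro!: derivative_eq_intros simp: power2_eq_square)
    then show "\<exists>y. ((\<lambda>h. F (x + h *\<^sub>R v) - h * \<psi> 0 - m / 2 * h^2 * (v \<bullet> v)) has_real_derivative y) (at h) \<and> 0 \<le> y"
      using mono[OF h(1)] by (intro exI[of _ "\<psi> h - \<psi> 0 - m * h * (v \<bullet> v)"]) auto
  qed simp
  then show ?thesis by (simp add: v_def \<psi>_def)
qed

lemma conv_tangent:
  assumes cv: "convex_on UNIV F" and d: "F differentiable (at x)"
  shows "F y \<ge> F x + grad_x F x \<bullet> (y - x)"
proof -
  define v where "v = y - x"
  have cv1: "convex_on UNIV (\<lambda>h. F (x + h *\<^sub>R v))"
    unfolding convex_on_def
  proof (intro conjI convex_UNIV allI impI ballI)
    fix a b u w :: real assume "0 \<le> u" "0 \<le> w" "u + w = 1"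
    have "F (x + (u * a + w * b) *\<^sub>R v) = F (u *\<^sub>R (x + a *\<^sub>R v) + w *\<^sub>R (x + b *\<^sub>R v))"
    proof -
      have "u *\<^sub>R (x + a *\<^sub>R v) + w *\<^sub>R (x + b *\<^sub>R v) = (u + w) *\<^sub>R x + (u * a + w * b) *\<^sub>R v"
        by (simp add: algebra_simps)
      then show ?thesis using \<open>u + w = 1\<close> by simp
    qed
    also have "\<dots> \<le> u * F (x + a *\<^sub>R v) + w * F (x + b *\<^sub>R v)"
      using cv \<open>0 \<le> u\<close> \<open>0 \<le> w\<close> \<open>u + w = 1\<close> unfolding convex_on_def by blast
    finally show "F (x + (u *\<^sub>R a + w *\<^sub>R b) *\<^sub>R v) \<le> u * F (x + a *\<^sub>R v) + w * F (x + b *\<^sub>R v)"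
      by simp
  qed
  have dd: "((\<lambda>h. F (x + h *\<^sub>R v)) has_real_derivative (grad_x F x \<bullet> v)) (at 0)"
  proof -
    have l: "((\<lambda>h. x + h *\<^sub>R v) has_derivative (\<lambda>h. h *\<^sub>R v)) (at 0)"
      by (auto intro!: derivative_eq_intros)
    have "((\<lambda>h. F (x + h *\<^sub>R v)) has_derivative (\<lambda>h. grad_x F x \<bullet> (h *\<^sub>R v))) (at 0)"
    proof -
      have g: "(F has_derivative (\<lambda>h. grad_x F x \<bullet> h)) (at (x + 0 *\<^sub>R v))"
        using grad_deriv[OF d] by simp
      show ?thesis using diff_chain_at[OF l g] by (simp add: o_def)
    qed
    then show ?thesis unfolding has_field_derivative_def by (simp add: mult_commute_abs)
  qed
  have "(\<lambda>h. F (x + h *\<^sub>R v)) 1 - (\<lambda>h. F (x + h *\<^sub>R v)) 0 \<ge> (grad_x F x \<bullet> v) * (1 - 0)"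
    by (rule convex_on_imp_above_tangent[OF cv1]) (auto simp: dd)
  then show ?thesis by (simp add: v_def)
qed


lemma conv_psd:
  assumes C: "C2_x F" and cv: "convex_on UNIV F"
  shows "v \<bullet> (hess_x F x *v v) \<ge> 0"
proof (rule ccontr)
  assume neg: "\<not> ?thesis"
  have dF: "\<And>y. F differentiable (at y)" using C unfolding C2_x_def by blast
  define \<psi> where "\<psi> h = grad_x F (x + h *\<^sub>R v) \<bullet> v" for h
  have D: "DERIV \<psi> 0 :> v \<bullet> (hess_x F x *v v)"
    using line_deriv2[OF C, of x v 0] unfolding \<psi>_def by simp
  obtain d where d: "d > 0" "\<forall>h>0. h < d \<longrightarrow> \<psi> 0 > \<psi> (0 + h)"
    using DERIV_neg_dec_right[OF D] neg by force
  define h where "h = d / 2"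
  have h: "h > 0" "h < d" using d by (auto simp: h_def)
  have t1: "F (x + h *\<^sub>R v) \<ge> F x + grad_x F x \<bullet> (x + h *\<^sub>R v - x)"
    by (rule conv_tangent[OF cv dF])
  have t2: "F x \<ge> F (x + h *\<^sub>R v) + grad_x F (x + h *\<^sub>R v) \<bullet> (x - (x + h *\<^sub>R v))"
    by (rule conv_tangent[OF cv dF])
  have "h * \<psi> h \<ge> h * \<psi> 0"
    using t1 t2 unfolding \<psi>_def by (simp add: inner_diff_right algebra_simps)
  then have "\<psi> h \<ge> \<psi> 0" using h by simp
  then show False using d h by force
qed


lemma at_nonneg_nonbot: "(t::real) \<ge> 0 \<Longrightarrow> at t within {0..} \<noteq> bot"
proof
  assume "t \<ge> 0" "at t within {0..} = bot"
  moreover have "at_right t \<le> at t within {0..}"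
    using \<open>t \<ge> 0\<close> by (intro at_le) auto
  ultimately show False using trivial_limit_at_right_real[of t] by (simp add: bot_unique)
qed

lemma tderiv_eq:
  assumes "(g has_real_derivative d) (at t within {0..})" "t \<ge> 0"
  shows "tderiv g t = d"
  unfolding tderiv_def
  using assms has_field_derivative_unique[OF _ _ at_nonneg_nonbot[OF assms(2)]]
  by (intro the_equality) auto

lemma tderiv_works:
  assumes "C1_t g" "t \<ge> 0"
  shows "(g has_real_derivative tderiv g t) (at t within {0..})"
proof -
  obtain D where "\<forall>t\<ge>0. (g has_real_derivative D t) (at t within {0..})"
    using assms unfolding C1_t_def by blast
  then show ?thesis using tderiv_eq assms(2) by metis
qed

lemma joint_deriv:
  assumes A: "assm1_smooth F" and t: "t \<ge> 0"
  shows "((\<lambda>(x, y). F x y) has_derivative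
           (\<lambda>(hx, ht). grad_x (\<lambda>y. F y t) x \<bullet> hx + ht * tderiv (\<lambda>s. F x s) t))
         (at (x, t) within UNIV \<times> {0..})"
proof -
  have C2: "C2_x (\<lambda>y. F y t)" using A t unfolding assm1_smooth_def by blast
  have fx: "((\<lambda>x. F x t) has_derivative (\<lambda>h. grad_x (\<lambda>y. F y t) x \<bullet> h)) (at x within UNIV)"
    using grad_deriv C2 unfolding C2_x_def by blast
  have fy: "((\<lambda>y. F x' y) has_derivative blinfun_apply (blinfun_scaleR_left (tderiv (\<lambda>s. F x' s) y))) (at y within {0..})"
    if "x' \<in> UNIV" "y \<in> {0..}" for x' y
  proof -
    have "C1_t (\<lambda>s. F x' s)" using A unfolding assm1_smooth_def by blast
    then have "((\<lambda>s. F x' s) has_real_derivative tderiv (\<lambda>s. F x' s) y) (at y within {0..})"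
      using tderiv_works that by auto
    then show ?thesis unfolding has_field_derivative_def by (simp add: mult_commute_abs)
  qed
  have cT: "continuous_on (UNIV \<times> {0..}) (\<lambda>(x, t). tderiv (\<lambda>s. F x s) t)"
    using A unfolding assm1_smooth_def joint_regular_def by blast
  have "continuous (at (x, t) within UNIV \<times> {0..}) (\<lambda>(x, t). tderiv (\<lambda>s. F x s) t)"
    using cT t by (simp add: continuous_on_eq_continuous_within)
  then have fyc: "continuous (at (x, t) within UNIV \<times> {0..}) (\<lambda>(x, y). blinfun_scaleR_left (tderiv (\<lambda>s. F x s) y))"
    using bounded_linear.continuous[OF bounded_linear_blinfun_scaleR_left] by (simp add: case_prod_beta')
  have "((\<lambda>(x, y). F x y) has_derivative
           (\<lambda>(tx, ty). grad_x (\<lambda>y. F y t) x \<bullet> tx + blinfun_scaleR_left (tderiv (\<lambda>s. F x s) t) ty))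
         (at (x, t) within UNIV \<times> {0..})"
    by (rule has_derivative_partialsI[OF fx fy fyc]) (use t in auto)
  then show ?thesis by (simp add: case_prod_beta' mult.commute)
qed


lemma quad_bound:
  fixes m A N r :: real
  assumes "m > 0" "A \<ge> 0" "N \<ge> 0" "r \<ge> 0" "m * r^2 \<le> A + N * r"
  shows "r^2 \<le> 4 * N^2 / m^2 + 2 * A / m"
proof (cases "N * r \<le> m * r^2 / 2")
  case True
  then have "m * r^2 \<le> 2 * A" using assms by linarith
  then have "r^2 \<le> 2 * A / m" using assms by (simp add: field_simps)
  moreover have "0 \<le> 4 * N^2 / m^2" by simp
  ultimately show ?thesis by linarith
next
  case False
  then have "m * r^2 < 2 * N * r" by linarith
  then have "r > 0" using assms by (cases "r = 0") auto
  then have "m * r < 2 * N" using \<open>m * r^2 < 2 * N * r\<close> by (simp add: power2_eq_square)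
  then have "r < 2 * N / m" using assms by (simp add: field_simps)
  then have "r^2 \<le> (2 * N / m)^2" using \<open>r > 0\<close> by (intro power_mono) auto
  then have "r^2 \<le> 4 * N^2 / m^2" by (simp add: power_divide power_mult_distrib)
  moreover have "0 \<le> 2 * A / m" using assms by simp
  ultimately show ?thesis by linarith
qed

lemma exp_decay_lim: "\<sigma> > 0 \<Longrightarrow> ((\<lambda>t::real. exp (- (2 * \<sigma>) * t)) \<longlongrightarrow> 0) at_top"
proof -
  assume "\<sigma> > 0"
  have "filterlim (\<lambda>t::real. (2 * \<sigma>) * t) at_top at_top"
    by (rule filterlim_tendsto_pos_mult_at_top[OF tendsto_const]) (use \<open>\<sigma> > 0\<close> in \<open>auto intro: filterlim_ident\<close>)
  then have "filterlim (\<lambda>t::real. - (2 * \<sigma>) * t) at_bot at_top"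
    by (simp add: filterlim_uminus_at_bot)
  then show ?thesis using exp_at_bot filterlim_compose by blast
qed



lemma joint_grad_deriv:
  assumes A: "assm1_smooth F" and t: "t \<ge> 0"
  shows "\<exists>D. ((\<lambda>(y, s). grad_x (\<lambda>w. F w s) y) has_derivative D) (at (x, t) within UNIV \<times> {0..})"
proof -
  have "\<forall>j. \<exists>Dj. ((\<lambda>(y, s). grad_x (\<lambda>w. F w s) y $ j) has_derivative Dj) (at (x, t) within UNIV \<times> {0..})"
    using A t unfolding assm1_smooth_def joint_regular_def differentiable_def by blast
  then obtain Dj where Dj: "\<And>j. ((\<lambda>(y, s). grad_x (\<lambda>w. F w s) y $ j) has_derivative Dj j) (at (x, t) within UNIV \<times> {0..})"
    by metis
  have "((\<lambda>(y, s). grad_x (\<lambda>w. F w s) y) has_derivative (\<lambda>h. \<chi> j. Dj j h)) (at (x, t) within UNIV \<times> {0..})"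
    by (rule vec_has_derivative) (use Dj in \<open>simp add: case_prod_beta'\<close>)
  then show ?thesis by blast
qed

theorem theorem1:
  fixes f0 :: "real^'n \<Rightarrow> real \<Rightarrow> real"
    and f :: "nat \<Rightarrow> real^'n \<Rightarrow> real \<Rightarrow> real"
    and p :: nat
    and m :: real
    and xs :: "real \<Rightarrow> real^'n"
    and lam :: "real \<Rightarrow> nat \<Rightarrow> real"
    and x0 :: "real^'n"
    and \<epsilon> \<alpha> \<sigma> s0 :: real
    and s c :: "real \<Rightarrow> real"
    and P :: "real^'n^'n"
    and Phi :: "real^'n \<Rightarrow> real \<Rightarrow> real"
    and D :: "real \<Rightarrow> (real^'n) set"
    and z :: "real \<Rightarrow> real^'n"
  assumes A1_f0: "assm1_smooth f0"
    and A1_f: "\<forall>i\<in>{1..p}. assm1_smooth (f i)"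
    and m_pos: "m > 0"
    and strong: "\<forall>t\<ge>0. \<forall>x v. v \<bullet> (hess_x (\<lambda>y. f0 y t) x *v v) \<ge> m * (v \<bullet> v)"
    and cvx: "\<forall>i\<in>{1..p}. \<forall>t\<ge>0. convex_on UNIV (\<lambda>x. f i x t)"
    and slater: "\<exists>xd. \<forall>i\<in>{1..p}. \<forall>t\<ge>0. f i xd t < 0"
    and xs_opt: "\<forall>t\<ge>0. (\<forall>i\<in>{1..p}. f i (xs t) t \<le> 0) \<and>
                    (\<forall>x. (\<forall>i\<in>{1..p}. f i x t \<le> 0) \<longrightarrow> f0 (xs t) t \<le> f0 x t)"
    and KKT: "\<forall>t\<ge>0. grad_x (\<lambda>y. f0 y t) (xs t)
                  + (\<Sum>i=1..p. lam t i *\<^sub>R grad_x (\<lambda>y. f i y t) (xs t)) = 0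
               \<and> (\<forall>i\<in>{1..p}. lam t i * f i (xs t) t = 0 \<and> lam t i \<ge> 0)"
    and A3: "\<forall>\<beta>>0. \<forall>i\<in>{1..p}. ((\<lambda>t. lam t i * exp (- \<beta> * t)) \<longlongrightarrow> 0) at_top"
    and eps_pos: "\<epsilon> > 0"
    and s0_def: "s0 = (if Max ((\<lambda>i. f i x0 0) ` {1..p}) \<le> 0 then 0
                       else Max ((\<lambda>i. f i x0 0) ` {1..p}) + \<epsilon>)"
    and alpha_pos: "\<alpha> > 0"
    and s_def: "\<forall>t. s t = s0 * exp (- \<alpha> * t)"
    and c_pos: "\<forall>t\<ge>0. c t > 0"
    and c_C1: "C1_t c"
    and c_lim: "filterlim c at_top at_top"
    and P_sym: "transpose P = P"
    and sigma_pos: "\<sigma> > 0"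
    and P_ge: "\<forall>v. v \<bullet> (P *v v) \<ge> \<sigma> * (v \<bullet> v)"
    and Phi_def: "\<forall>x t. Phi x t = f0 x t - (1 / c t) * (\<Sum>i=1..p. ln (s t - f i x t))"
    and D_def: "\<forall>t. D t = {x. \<forall>i\<in>{1..p}. f i x t < s t}"
    and z0: "z 0 = x0"
    and z_in: "\<forall>t\<ge>0. z t \<in> D t"
    and z_ode: "\<forall>t\<ge>0. (z has_vector_derivative
                  (- (matrix_inv (hess_x (\<lambda>y. Phi y t) (z t))
                       *v (P *v grad_x (\<lambda>y. Phi y t) (z t) + grad_xt Phi (z t) t))))
                 (at t within {0..})"
  shows "((\<lambda>t. z t - xs t) \<longlongrightarrow> 0) at_top"
proof -
  define gf0 where "gf0 y \<tau> = grad_x (\<lambda>y. f0 y \<tau>) y" for y \<tau>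
  define gf where "gf k y \<tau> = grad_x (\<lambda>y. f k y \<tau>) y" for k y \<tau>
  define G where "G y \<tau> = gf0 y \<tau> + (1 / c \<tau>) *\<^sub>R (\<Sum>k\<in>{1..p}. (1 / (s \<tau> - f k y \<tau>)) *\<^sub>R gf k y \<tau>)" for y \<tau>
  define g where "g t = grad_x (\<lambda>y. Phi y t) (z t)" for t
  have C2f0: "\<And>t. t \<ge> 0 \<Longrightarrow> C2_x (\<lambda>y. f0 y t)" using A1_f0 unfolding assm1_smooth_def by blast
  have C2f: "\<And>k t. k \<in> {1..p} \<Longrightarrow> t \<ge> 0 \<Longrightarrow> C2_x (\<lambda>y. f k y t)" using A1_f unfolding assm1_smooth_def by blast
  have df0: "\<And>t y. t \<ge> 0 \<Longrightarrow> (\<lambda>y. f0 y t) differentiable (at y)" using C2f0 unfolding C2_x_def by blast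
  have df: "\<And>k t y. k \<in> {1..p} \<Longrightarrow> t \<ge> 0 \<Longrightarrow> (\<lambda>y. f k y t) differentiable (at y)" using C2f unfolding C2_x_def by blast
  have s_eq: "s = (\<lambda>t. s0 * exp (- \<alpha> * t))" using s_def by auto
  have Phi_eq: "\<And>t. (\<lambda>y. Phi y t) = (\<lambda>y. f0 y t - (1 / c t) * (\<Sum>i=1..p. ln (s t - f i y t)))"
    using Phi_def by auto
  have gradPhi: "grad_x (\<lambda>y. Phi y \<tau>) y = G y \<tau>" if \<tau>: "\<tau> \<ge> 0" and y: "y \<in> D \<tau>" for \<tau> y
  proof (rule grad_eq)
    have pos: "\<And>k. k \<in> {1..p} \<Longrightarrow> s \<tau> - f k y \<tau> > 0" using y D_def by auto
    have dk: "((\<lambda>y. ln (s \<tau> - f i y \<tau>)) has_derivative (\<lambda>h. - (gf i y \<tau> \<bullet> h) / (s \<tau> - f i y \<tau>))) (at y)"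
      if i: "i \<in> {1..p}" for i
    proof -
      have "((\<lambda>y. f i y \<tau>) has_derivative (\<lambda>h. gf i y \<tau> \<bullet> h)) (at y)"
        unfolding gf_def by (rule grad_deriv[OF df[OF i \<tau>]])
      then show ?thesis using pos[OF i]
        by (auto intro!: derivative_eq_intros simp: field_simps)
    qed
    have dsum: "((\<lambda>y. \<Sum>i=1..p. ln (s \<tau> - f i y \<tau>)) has_derivative (\<lambda>h. \<Sum>i=1..p. - (gf i y \<tau> \<bullet> h) / (s \<tau> - f i y \<tau>))) (at y)"
      by (rule has_derivative_sum) (use dk in auto)
    have d0: "((\<lambda>y. f0 y \<tau>) has_derivative (\<lambda>h. gf0 y \<tau> \<bullet> h)) (at y)"
      unfolding gf0_def by (rule grad_deriv[OF df0[OF \<tau>]])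
    have "((\<lambda>y. f0 y \<tau> - (1 / c \<tau>) * (\<Sum>i=1..p. ln (s \<tau> - f i y \<tau>))) has_derivative
      (\<lambda>h. gf0 y \<tau> \<bullet> h - (1 / c \<tau>) * (\<Sum>i=1..p. (- (gf i y \<tau> \<bullet> h)) / (s \<tau> - f i y \<tau>)))) (at y)"
      by (intro has_derivative_diff d0 has_derivative_mult_right dsum)
    then show "((\<lambda>y. Phi y \<tau>) has_derivative (\<lambda>h. G y \<tau> \<bullet> h)) (at y)"
      unfolding Phi_eq
      by (rule has_derivative_eq_rhs)
         (auto simp: G_def fun_eq_iff inner_add_left inner_sum_left sum_divide_distrib field_simps sum_negf)
  qed
  define b where "b k t = s t - f k (z t) t" for k t
  define DGx where "DGx t h = hess_x (\<lambda>y. f0 y t) (z t) *v h + (1 / c t) *\<^sub>R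
     (\<Sum>k\<in>{1..p}. (1 / b k t) *\<^sub>R (hess_x (\<lambda>y. f k y t) (z t) *v h)
         + ((gf k (z t) t \<bullet> h) / (b k t)^2) *\<^sub>R gf k (z t) t)" for t h
  have bpos: "b k t > 0" if "t \<ge> 0" "k \<in> {1..p}" for k t
    using z_in D_def that unfolding b_def by auto
  have dGx: "((\<lambda>y. G y t) has_derivative DGx t) (at (z t))" if t: "t \<ge> 0" for t
  proof -
    have dk: "((\<lambda>y. (1 / (s t - f k y t)) *\<^sub>R gf k y t) has_derivative
        (\<lambda>h. (1 / b k t) *\<^sub>R (hess_x (\<lambda>y. f k y t) (z t) *v h)
         + ((gf k (z t) t \<bullet> h) / (b k t)^2) *\<^sub>R gf k (z t) t)) (at (z t))"
      if k: "k \<in> {1..p}" for k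
    proof -
      have d1: "((\<lambda>y. f k y t) has_derivative (\<lambda>h. gf k (z t) t \<bullet> h)) (at (z t))"
        unfolding gf_def by (rule grad_deriv[OF df[OF k t]])
      have d2: "((\<lambda>y. gf k y t) has_derivative (\<lambda>h. hess_x (\<lambda>y. f k y t) (z t) *v h)) (at (z t))"
        unfolding gf_def by (rule hess_deriv[OF C2f[OF k t]])
      have d3: "((\<lambda>y. 1 / (s t - f k y t)) has_derivative (\<lambda>h. (gf k (z t) t \<bullet> h) / (b k t)^2)) (at (z t))"
        using d1 bpos[OF t k] unfolding b_def
        by (auto intro!: derivative_eq_intros simp: power2_eq_square field_simps)
      show ?thesis
        using has_derivative_scaleR[OF d3 d2] bpos[OF t k] unfolding b_def
        by (simp add: algebra_simps)
    qed
    have d0: "((\<lambda>y. gf0 y t) has_derivative (\<lambda>h. hess_x (\<lambda>y. f0 y t) (z t) *v h)) (at (z t))"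
      unfolding gf0_def by (rule hess_deriv[OF C2f0[OF t]])
    have "((\<lambda>y. G y t) has_derivative (\<lambda>h. hess_x (\<lambda>y. f0 y t) (z t) *v h + (1 / c t) *\<^sub>R
     (\<Sum>k\<in>{1..p}. (1 / b k t) *\<^sub>R (hess_x (\<lambda>y. f k y t) (z t) *v h)
         + ((gf k (z t) t \<bullet> h) / (b k t)^2) *\<^sub>R gf k (z t) t))) (at (z t))"
      unfolding G_def
      by (intro has_derivative_add d0 has_derivative_scaleR_right has_derivative_sum) (use dk in auto)
    then show ?thesis unfolding DGx_def[abs_def] by simp
  qed
  have openD: "open (D t)" if t: "t \<ge> 0" for t
  proof -
    have "D t = (\<Inter>k\<in>{1..p}. {y. f k y t < s t})" using D_def by auto
    moreover have "open {y. f k y t < s t}" if k: "k \<in> {1..p}" for k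
    proof -
      have "continuous_on UNIV (\<lambda>y. f k y t)"
        using df[OF k t] by (simp add: continuous_at_imp_continuous_on differentiable_imp_continuous_within)
      then show ?thesis by (intro open_Collect_less) (auto intro: continuous_intros)
    qed
    ultimately show ?thesis by auto
  qed
  have Hx: "hess_x (\<lambda>y. Phi y t) (z t) *v h = DGx t h" if t: "t \<ge> 0" for t h
  proof -
    have lin: "linear (\<lambda>h. DGx t h $ i)" for i
      using has_derivative_linear[OF dGx[OF t]] by (simp add: linear_compose[of _ "\<lambda>x. x $ i", unfolded o_def] bounded_linear.linear[OF bounded_linear_vec_nth])
    have fr: "frechet_derivative (\<lambda>y. grad_x (\<lambda>y. Phi y t) y $ i) (at (z t)) = (\<lambda>h. DGx t h $ i)" for i
    proof -
      have "((\<lambda>y. G y t $ i) has_derivative (\<lambda>h. DGx t h $ i)) (at (z t))"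
        using bounded_linear.has_derivative[OF bounded_linear_vec_nth dGx[OF t]] .
      then have "((\<lambda>y. grad_x (\<lambda>y. Phi y t) y $ i) has_derivative (\<lambda>h. DGx t h $ i)) (at (z t))"
        by (rule has_derivative_transform_within_open[OF _ openD[OF t]]) (use z_in t gradPhi in auto)
      then show ?thesis by (rule frechet_derivative_at[symmetric])
    qed
    show ?thesis
      unfolding vec_eq_iff matrix_vector_mult_def hess_x_def
      by (auto simp: fr lin_expand[OF lin, of h] mult.commute)
  qed
  have PD: "v \<bullet> DGx t v \<ge> m * (v \<bullet> v)" if t: "t \<ge> 0" for t v
  proof -
    have nn: "0 \<le> v \<bullet> ((1 / b k t) *\<^sub>R (hess_x (\<lambda>y. f k y t) (z t) *v v)
         + ((gf k (z t) t \<bullet> v) / (b k t)^2) *\<^sub>R gf k (z t) t)" if k: "k \<in> {1..p}" for k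
    proof -
      have "0 \<le> v \<bullet> (hess_x (\<lambda>y. f k y t) (z t) *v v)"
        by (rule conv_psd[OF C2f[OF k t]]) (use cvx k t in auto)
      moreover have "0 \<le> (gf k (z t) t \<bullet> v) * (gf k (z t) t \<bullet> v) / (b k t)^2" by simp
      ultimately show ?thesis using bpos[OF t k]
        by (simp add: inner_add_right inner_commute[of v "gf k (z t) t"])
    qed
    have "0 \<le> v \<bullet> ((1 / c t) *\<^sub>R (\<Sum>k\<in>{1..p}. (1 / b k t) *\<^sub>R (hess_x (\<lambda>y. f k y t) (z t) *v v)
         + ((gf k (z t) t \<bullet> v) / (b k t)^2) *\<^sub>R gf k (z t) t))"
    proof -
      have "0 \<le> (\<Sum>k\<in>{1..p}. v \<bullet> ((1 / b k t) *\<^sub>R (hess_x (\<lambda>y. f k y t) (z t) *v v)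
         + ((gf k (z t) t \<bullet> v) / (b k t)^2) *\<^sub>R gf k (z t) t))"
        by (rule sum_nonneg) (use nn in blast)
      moreover have "c t > 0" using c_pos t by blast
      ultimately show ?thesis by (simp add: inner_sum_right)
    qed
    moreover have "v \<bullet> (hess_x (\<lambda>y. f0 y t) (z t) *v v) \<ge> m * (v \<bullet> v)" using strong t by blast
    ultimately show ?thesis unfolding DGx_def by (simp add: inner_add_right)
  qed
  have inv: "hess_x (\<lambda>y. Phi y t) (z t) *v (matrix_inv (hess_x (\<lambda>y. Phi y t) (z t)) *v w) = w"
    if t: "t \<ge> 0" for t w
  proof -
    let ?H = "hess_x (\<lambda>y. Phi y t) (z t)"
    have "inj ((*v) ?H)"
    proof (rule injI)
      fix u v assume "?H *v u = ?H *v v"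
      then have "?H *v (u - v) = 0" by (simp add: matrix_vector_mult_diff_distrib)
      then have "DGx t (u - v) = 0" using Hx[OF t] by simp
      then have "m * ((u - v) \<bullet> (u - v)) \<le> 0" using PD[OF t, of "u - v"] by simp
      then have "(u - v) \<bullet> (u - v) \<le> 0" using m_pos by (simp add: mult_le_0_iff)
      then have "\<not> (0 < (u - v) \<bullet> (u - v))" by linarith
      then have "u - v = 0" using inner_gt_zero_iff[of "u - v"] by blast
      then show "u = v" by simp
    qed
    then have "invertible ?H"
      using matrix_left_invertible_injective invertible_left_inverse by blast
    then have "?H ** matrix_inv ?H = mat 1"
      unfolding invertible_def matrix_inv_def by (rule someI_ex[THEN conjunct1])
    then show ?thesis by (simp add: matrix_vector_mul_assoc)
  qed
  have jd: "(\<lambda>q. G (fst q) (snd q)) differentiable (at (z t, t) within UNIV \<times> {0..})"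
    if t: "t \<ge> 0" for t
  proof -
    have d0: "(\<lambda>q. gf0 (fst q) (snd q)) differentiable (at (z t, t) within UNIV \<times> {0..})"
      using joint_grad_deriv[OF A1_f0 t, of "z t"] unfolding differentiable_def gf0_def
      by (simp add: case_prod_beta')
    have dk: "(\<lambda>q. gf k (fst q) (snd q)) differentiable (at (z t, t) within UNIV \<times> {0..})"
      if k: "k \<in> {1..p}" for k
      using joint_grad_deriv[OF _ t, of "f k" "z t"] A1_f k unfolding differentiable_def gf_def
      by (simp add: case_prod_beta')
    have dfk: "(\<lambda>q. f k (fst q) (snd q)) differentiable (at (z t, t) within UNIV \<times> {0..})"
      if k: "k \<in> {1..p}" for k
      using joint_deriv[OF _ t, of "f k" "z t"] A1_f k unfolding differentiable_def
      by (auto simp: case_prod_beta')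
    have dc: "(\<lambda>q. c (snd q)) differentiable (at (z t, t) within UNIV \<times> {0..})"
    proof -
      have "(c has_derivative (\<lambda>h. h * tderiv c t)) (at (snd (z t, t)) within snd ` (UNIV \<times> {0..}))"
        using tderiv_works[OF c_C1 t] by (simp add: has_field_derivative_def mult_commute_abs)
      from diff_chain_within[OF has_derivative_snd[OF has_derivative_ident] this]
      show ?thesis unfolding differentiable_def o_def by blast
    qed
    have ds: "(\<lambda>q. s (snd q)) differentiable (at (z t, t) within UNIV \<times> {0..})"
    proof -
      have "((\<lambda>q. s0 * exp (- \<alpha> * snd q)) has_derivative (\<lambda>h. s0 * (exp (- \<alpha> * snd (z t, t)) * (- \<alpha> * snd h))))
              (at (z t, t) within UNIV \<times> {0..})"
        by (auto intro!: derivative_eq_intros simp: fun_eq_iff)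
      then show ?thesis unfolding s_eq differentiable_def by blast
    qed
    have "c t \<noteq> 0" using c_pos t by auto
    moreover have "\<And>k. k \<in> {1..p} \<Longrightarrow> s t - f k (z t) t \<noteq> 0" using bpos[OF t] unfolding b_def by force
    ultimately show ?thesis unfolding G_def
      by (intro differentiable_add d0 differentiable_scaleR differentiable_divide differentiable_const dc
          differentiable_sum finite_atLeastAtMost ballI differentiable_diff ds dfk dk) auto
  qed
  have ode_g: "(g has_vector_derivative - (P *v g t)) (at t within {0..})" if t: "t \<ge> 0" for t
  proof -
    obtain DG where DG: "((\<lambda>q. G (fst q) (snd q)) has_derivative DG) (at (z t, t) within UNIV \<times> {0..})"
      using jd[OF t] differentiable_def by blast
    have lDG: "linear DG" using has_derivative_linear[OF DG] .
    have e1: "((\<lambda>y. (y, t)) has_derivative (\<lambda>h. (h, 0))) (at (z t) within UNIV)"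
      by (auto intro!: derivative_eq_intros)
    have DG1: "((\<lambda>q. G (fst q) (snd q)) has_derivative DG) (at ((\<lambda>y. (y, t)) (z t)) within (\<lambda>y. (y, t)) ` UNIV)"
      by (rule has_derivative_subset[OF DG]) (use t in auto)
    from diff_chain_within[OF e1 DG1]
    have "((\<lambda>y. G y t) has_derivative (\<lambda>h. DG (h, 0))) (at (z t))" by (simp add: o_def)
    then have D1: "(\<lambda>h. DG (h, 0)) = DGx t" using has_derivative_unique dGx[OF t] by blast
    have e2: "((\<lambda>\<tau>. (z t, \<tau>)) has_derivative (\<lambda>h. (0, h))) (at t within {0..})"
      by (auto intro!: derivative_eq_intros)
    have DG2: "((\<lambda>q. G (fst q) (snd q)) has_derivative DG) (at ((\<lambda>\<tau>. (z t, \<tau>)) t) within (\<lambda>\<tau>. (z t, \<tau>)) ` {0..})"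
      by (rule has_derivative_subset[OF DG]) auto
    from diff_chain_within[OF e2 DG2]
    have "((\<lambda>\<tau>. G (z t) \<tau>) has_derivative (\<lambda>h. DG (0, h))) (at t within {0..})" by (simp add: o_def)
    moreover have "(\<lambda>h. DG (0, h)) = (\<lambda>h. h *\<^sub>R DG (0, 1))"
    proof
      fix h :: real
      show "DG (0, h) = h *\<^sub>R DG (0, 1)" using linear_scale[OF lDG, of h "(0, 1)"] by simp
    qed
    ultimately have dG2: "((\<lambda>\<tau>. G (z t) \<tau>) has_derivative (\<lambda>h. h *\<^sub>R DG (0, 1))) (at t within {0..})"
      by simp
    have ev: "\<forall>\<^sub>F \<tau> in at t within {0..}. z t \<in> D \<tau>"
    proof -
      have "\<forall>\<^sub>F \<tau> in at t within {0..}. 0 < s \<tau> - f k (z t) \<tau>" if k: "k \<in> {1..p}" for k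
      proof -
        have "C1_t (\<lambda>\<tau>. f k (z t) \<tau>)" using A1_f k unfolding assm1_smooth_def by blast
        then have "continuous (at t within {0..}) (\<lambda>\<tau>. f k (z t) \<tau>)"
          using DERIV_continuous tderiv_works t by blast
        moreover have "continuous (at t within {0..}) s" unfolding s_eq by (intro continuous_intros)
        ultimately have "continuous (at t within {0..}) (\<lambda>\<tau>. s \<tau> - f k (z t) \<tau>)"
          by (intro continuous_intros)
        then have "((\<lambda>\<tau>. s \<tau> - f k (z t) \<tau>) \<longlongrightarrow> s t - f k (z t) t) (at t within {0..})"
          by (simp add: continuous_within)
        moreover have "0 < s t - f k (z t) t" using bpos[OF t k] unfolding b_def .
        ultimately show ?thesis by (rule order_tendstoD(1))
      qed
      then have "\<forall>\<^sub>F \<tau> in at t within {0..}. \<forall>k\<in>{1..p}. 0 < s \<tau> - f k (z t) \<tau>"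
        by (intro eventually_ball_finite) auto
      then show ?thesis by eventually_elim (auto simp: D_def)
    qed
    have ev2: "\<forall>\<^sub>F \<tau> in at t within {0..}. grad_x (\<lambda>y. Phi y \<tau>) (z t) = G (z t) \<tau>"
      using ev unfolding eventually_at_filter
      by eventually_elim (auto intro: gradPhi)
    have gxt: "grad_xt Phi (z t) t = DG (0, 1)"
      unfolding grad_xt_def vec_eq_iff
    proof
      fix i
      have "((\<lambda>\<tau>. G (z t) \<tau> $ i) has_real_derivative (DG (0, 1) $ i)) (at t within {0..})"
        using bounded_linear.has_derivative[OF bounded_linear_vec_nth dG2, of i]
        by (simp add: has_field_derivative_def mult_commute_abs)
      moreover have "\<forall>\<^sub>F \<tau> in at t within {0..}. grad_x (\<lambda>y. Phi y \<tau>) (z t) $ i = G (z t) \<tau> $ i"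
        using ev2 by eventually_elim simp
      moreover have "grad_x (\<lambda>y. Phi y t) (z t) $ i = G (z t) t $ i"
        using gradPhi t z_in by auto
      ultimately have "((\<lambda>\<tau>. grad_x (\<lambda>y. Phi y \<tau>) (z t) $ i) has_real_derivative (DG (0, 1) $ i)) (at t within {0..})"
        using has_field_derivative_cong_eventually[of "\<lambda>\<tau>. grad_x (\<lambda>y. Phi y \<tau>) (z t) $ i" "\<lambda>\<tau>. G (z t) \<tau> $ i" t "{0..}"]
        by blast
      then show "(\<chi> i. tderiv (\<lambda>s. grad_x (\<lambda>y. Phi y s) (z t) $ i) t) $ i = DG (0, 1) $ i"
        using tderiv_eq t by simp
    qed
    define z' where "z' = - (matrix_inv (hess_x (\<lambda>y. Phi y t) (z t))
                       *v (P *v grad_x (\<lambda>y. Phi y t) (z t) + grad_xt Phi (z t) t))"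
    have zd: "(z has_derivative (\<lambda>h. h *\<^sub>R z')) (at t within {0..})"
      using z_ode t unfolding z'_def has_vector_derivative_def by blast
    have e3: "((\<lambda>\<tau>. (z \<tau>, \<tau>)) has_derivative (\<lambda>h. (h *\<^sub>R z', h))) (at t within {0..})"
      by (intro has_derivative_Pair zd has_derivative_ident)
    have DG3: "((\<lambda>q. G (fst q) (snd q)) has_derivative DG) (at ((\<lambda>\<tau>. (z \<tau>, \<tau>)) t) within (\<lambda>\<tau>. (z \<tau>, \<tau>)) ` {0..})"
      by (rule has_derivative_subset[OF DG]) auto
    from diff_chain_within[OF e3 DG3]
    have d3: "((\<lambda>\<tau>. G (z \<tau>) \<tau>) has_derivative (\<lambda>h. DG (h *\<^sub>R z', h))) (at t within {0..})"
      by (simp add: o_def)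
    have "DG (h *\<^sub>R z', h) = h *\<^sub>R (- (P *v g t))" for h
    proof -
      have "DG (h *\<^sub>R z', h) = h *\<^sub>R (DG (z', 0) + DG (0, 1))"
        using linear_scale[OF lDG, of h "(z', 0) + (0, 1)"] linear_add[OF lDG, of "(z', 0)" "(0, 1)"] by simp
      also have "DG (z', 0) = hess_x (\<lambda>y. Phi y t) (z t) *v z'"
        using D1 Hx[OF t] by (metis)
      also have "\<dots> = - (P *v g t + grad_xt Phi (z t) t)"
      proof -
        have neg: "\<And>(A::real^'n^'n) w. A *v (- w) = - (A *v w)"
          by (simp add: vec_eq_iff matrix_vector_mult_def sum_negf)
        show ?thesis unfolding z'_def g_def using inv[OF t] by (simp add: neg)
      qed
      finally show ?thesis using gxt by simp
    qed
    then have "((\<lambda>\<tau>. G (z \<tau>) \<tau>) has_derivative (\<lambda>h. h *\<^sub>R (- (P *v g t)))) (at t within {0..})"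
      using d3 by simp
    then have "(g has_derivative (\<lambda>h. h *\<^sub>R (- (P *v g t)))) (at t within {0..})"
      by (rule has_derivative_transform_within[OF _ zero_less_one]) (use t z_in gradPhi in \<open>auto simp: g_def\<close>)
    then show ?thesis unfolding has_vector_derivative_def .
  qed
  define w where "w \<tau> = exp (2 * \<sigma> * \<tau>) * (g \<tau> \<bullet> g \<tau>)" for \<tau>
  have dw: "(w has_real_derivative exp (2 * \<sigma> * \<tau>) * (2 * \<sigma>) * (g \<tau> \<bullet> g \<tau>)
              + exp (2 * \<sigma> * \<tau>) * (2 * (g \<tau> \<bullet> (- (P *v g \<tau>))))) (at \<tau> within {0..})"
    if \<tau>: "\<tau> \<ge> 0" for \<tau>
  proof -
    have gd: "(g has_derivative (\<lambda>h. h *\<^sub>R (- (P *v g \<tau>)))) (at \<tau> within {0..})"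
      using ode_g[OF \<tau>] unfolding has_vector_derivative_def .
    have "((\<lambda>\<tau>. g \<tau> \<bullet> g \<tau>) has_derivative (\<lambda>h. g \<tau> \<bullet> (h *\<^sub>R (- (P *v g \<tau>))) + (h *\<^sub>R (- (P *v g \<tau>))) \<bullet> g \<tau>)) (at \<tau> within {0..})"
      by (rule has_derivative_inner[OF gd gd])
    then have "((\<lambda>\<tau>. g \<tau> \<bullet> g \<tau>) has_real_derivative (2 * (g \<tau> \<bullet> (- (P *v g \<tau>))))) (at \<tau> within {0..})"
      unfolding has_field_derivative_def
      by (rule has_derivative_eq_rhs) (auto simp: fun_eq_iff inner_commute algebra_simps)
    then show ?thesis unfolding w_def
      by (auto intro!: derivative_eq_intros)
  qed
  have dw_nonpos: "exp (2 * \<sigma> * \<tau>) * (2 * \<sigma>) * (g \<tau> \<bullet> g \<tau>)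
              + exp (2 * \<sigma> * \<tau>) * (2 * (g \<tau> \<bullet> (- (P *v g \<tau>)))) \<le> 0" for \<tau>
  proof -
    have "\<sigma> * (g \<tau> \<bullet> g \<tau>) \<le> g \<tau> \<bullet> (P *v g \<tau>)" using P_ge by blast
    then have "(2 * \<sigma>) * (g \<tau> \<bullet> g \<tau>) + 2 * (g \<tau> \<bullet> (- (P *v g \<tau>))) \<le> 0"
      by (simp add: inner_minus_right)
    then have "exp (2 * \<sigma> * \<tau>) * ((2 * \<sigma>) * (g \<tau> \<bullet> g \<tau>) + 2 * (g \<tau> \<bullet> (- (P *v g \<tau>)))) \<le> 0"
      by (simp add: mult_nonneg_nonpos)
    then show ?thesis by (simp add: algebra_simps)
  qed
  have decay: "g t \<bullet> g t \<le> exp (- (2 * \<sigma>) * t) * (g 0 \<bullet> g 0)" if t: "t \<ge> 0" for t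
  proof -
    have "w t \<le> w 0"
    proof (rule DERIV_nonpos_imp_decreasing_open[OF t])
      fix x :: real assume x: "0 < x" "x < t"
      have "at x within {0..} = at x"
        using x by (intro at_within_interior) auto
      then show "\<exists>y. (w has_real_derivative y) (at x) \<and> y \<le> 0"
        using dw[of x] dw_nonpos[of x] x by auto
    next
      show "continuous_on {0..t} w"
        by (rule DERIV_continuous_on[of _ _ "\<lambda>x. exp (2 * \<sigma> * x) * (2 * \<sigma>) * (g x \<bullet> g x)
              + exp (2 * \<sigma> * x) * (2 * (g x \<bullet> (- (P *v g x))))"])
           (use DERIV_subset[OF dw] in \<open>fastforce\<close>)
    qed
    then have "exp (2 * \<sigma> * t) * (g t \<bullet> g t) \<le> g 0 \<bullet> g 0" by (simp add: w_def)
    then have "exp (- (2 * \<sigma>) * t) * (exp (2 * \<sigma> * t) * (g t \<bullet> g t)) \<le> exp (- (2 * \<sigma>) * t) * (g 0 \<bullet> g 0)"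
      by (simp add: mult_left_mono)
    then show ?thesis by (simp add: mult.assoc[symmetric] exp_add[symmetric])
  qed
  have s_nonneg: "s t \<ge> 0" for t
  proof -
    have "s0 \<ge> 0" unfolding s0_def using eps_pos by auto
    then show ?thesis using s_def by simp
  qed
  have bound: "(z t - xs t) \<bullet> (z t - xs t) \<le> 4 * (g t \<bullet> g t) / m^2 + 2 * (p / c t + s t * (\<Sum>k=1..p. lam t k)) / m"
    if t: "t \<ge> 0" for t
  proof -
    define x where "x = z t"
    define y where "y = xs t"
    define d2 where "d2 = (x - y) \<bullet> (x - y)"
    define \<mu> where "\<mu> k = (1 / c t) * (1 / b k t)" for k
    have ct: "c t > 0" using c_pos t by blast
    have \<mu>pos: "\<mu> k > 0" if "k \<in> {1..p}" for k using bpos[OF t that] ct by (simp add: \<mu>_def)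
    have KK: "gf0 y t + (\<Sum>k=1..p. lam t k *\<^sub>R gf k y t) = 0"
      and lamf: "\<And>k. k \<in> {1..p} \<Longrightarrow> lam t k * f k y t = 0 \<and> lam t k \<ge> 0"
      using KKT t unfolding gf0_def gf_def y_def by blast+
    have feas: "\<And>k. k \<in> {1..p} \<Longrightarrow> f k y t \<le> 0" using xs_opt t unfolding y_def by blast
    have xin: "\<And>k. k \<in> {1..p} \<Longrightarrow> f k x t < s t" using z_in t D_def unfolding x_def by blast
    have gt: "g t = gf0 x t + (1 / c t) *\<^sub>R (\<Sum>k\<in>{1..p}. (1 / (s t - f k x t)) *\<^sub>R gf k x t)"
      unfolding g_def x_def using gradPhi[OF t z_in[rule_format, OF t]] by (simp add: G_def)
    have gv: "g t \<bullet> v = gf0 x t \<bullet> v + (\<Sum>k=1..p. \<mu> k * (gf k x t \<bullet> v))" for v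
      unfolding gt \<mu>_def b_def x_def
      by (simp add: inner_add_left inner_sum_left sum_distrib_left mult.assoc)
    have yx: "(y - x) \<bullet> (y - x) = d2"
      unfolding d2_def by (simp add: inner_diff_left inner_diff_right inner_commute)
    have SC1: "f0 y t \<ge> f0 x t + gf0 x t \<bullet> (y - x) + m / 2 * d2"
      using strong_conv[OF C2f0[OF t], where m=m and x=x and y=y] strong t yx unfolding gf0_def
      by simp
    have SC2: "f0 x t \<ge> f0 y t + gf0 y t \<bullet> (x - y) + m / 2 * d2"
      using strong_conv[OF C2f0[OF t], where m=m and x=y and y=x] strong t unfolding gf0_def d2_def by simp
    have CV3: "f k y t \<ge> f k x t + gf k x t \<bullet> (y - x)" if k: "k \<in> {1..p}" for k
      unfolding gf_def by (rule conv_tangent) (use cvx k t df[OF k t] in auto)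
    have CV4: "f k x t \<ge> f k y t + gf k y t \<bullet> (x - y)" if k: "k \<in> {1..p}" for k
      unfolding gf_def by (rule conv_tangent) (use cvx k t df[OF k t] in auto)
    have i: "(\<Sum>k=1..p. \<mu> k * (gf k x t \<bullet> (y - x))) \<le> (\<Sum>k=1..p. \<mu> k * f k y t) - (\<Sum>k=1..p. \<mu> k * f k x t)"
    proof -
      have "(\<Sum>k=1..p. \<mu> k * (gf k x t \<bullet> (y - x))) \<le> (\<Sum>k=1..p. \<mu> k * (f k y t - f k x t))"
        using CV3 \<mu>pos by (intro sum_mono mult_left_mono) (auto simp: algebra_simps less_imp_le)
      then show ?thesis by (simp add: sum_subtractf right_diff_distrib)
    qed
    have ii: "(\<Sum>k=1..p. lam t k * (gf k y t \<bullet> (x - y))) \<le> (\<Sum>k=1..p. lam t k * f k x t) - (\<Sum>k=1..p. lam t k * f k y t)"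
    proof -
      have "(\<Sum>k=1..p. lam t k * (gf k y t \<bullet> (x - y))) \<le> (\<Sum>k=1..p. lam t k * (f k x t - f k y t))"
        using CV4 lamf by (intro sum_mono mult_left_mono) (auto simp: algebra_simps)
      then show ?thesis by (simp add: sum_subtractf right_diff_distrib)
    qed
    have KK2: "gf0 y t \<bullet> (x - y) = - (\<Sum>k=1..p. lam t k * (gf k y t \<bullet> (x - y)))"
    proof -
      have "gf0 y t = - (\<Sum>k=1..p. lam t k *\<^sub>R gf k y t)" using KK by (simp add: eq_neg_iff_add_eq_0)
      then show ?thesis by (simp add: inner_sum_left)
    qed
    have lamy: "(\<Sum>k=1..p. lam t k * f k y t) = 0" by (rule sum.neutral) (use lamf in blast)
    have muy: "(\<Sum>k=1..p. \<mu> k * f k y t) \<le> 0"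
      using \<mu>pos feas by (intro sum_nonpos) (simp add: mult_nonneg_nonpos less_imp_le)
    have lamx: "(\<Sum>k=1..p. lam t k * f k x t) \<le> s t * (\<Sum>k=1..p. lam t k)"
    proof -
      have "(\<Sum>k=1..p. lam t k * f k x t) \<le> (\<Sum>k=1..p. lam t k * s t)"
        using lamf xin by (intro sum_mono mult_left_mono) (auto simp: less_imp_le)
      then show ?thesis by (simp add: sum_distrib_left mult.commute)
    qed
    have mux: "(\<Sum>k=1..p. \<mu> k * f k x t) \<ge> - (p / c t)"
    proof -
      have e: "\<mu> k * f k x t = \<mu> k * s t - 1 / c t" if k: "k \<in> {1..p}" for k
        using bpos[OF t k] ct unfolding \<mu>_def b_def x_def by (simp add: field_simps)
      have "(\<Sum>k=1..p. \<mu> k * f k x t) = (\<Sum>k=1..p. \<mu> k * s t) - p / c t"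
        using e by (simp add: sum_subtractf)
      moreover have "(\<Sum>k=1..p. \<mu> k * s t) \<ge> 0"
        using \<mu>pos s_nonneg by (intro sum_nonneg) (simp add: less_imp_le)
      ultimately show ?thesis by linarith
    qed
    have cs: "- (g t \<bullet> (y - x)) \<le> norm (g t) * sqrt d2"
    proof -
      have "\<bar>g t \<bullet> (y - x)\<bar> \<le> norm (g t) * norm (y - x)" by (rule Cauchy_Schwarz_ineq2)
      moreover have "norm (y - x) = sqrt d2" using yx by (simp add: norm_eq_sqrt_inner)
      ultimately have "\<bar>g t \<bullet> (y - x)\<bar> \<le> norm (g t) * sqrt d2" by simp
      then show ?thesis by linarith
    qed
    have main: "m * d2 \<le> (p / c t + s t * (\<Sum>k=1..p. lam t k)) + norm (g t) * sqrt d2"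
      using SC1 SC2 i ii KK2 lamy muy lamx mux cs gv[of "y - x"] by linarith
    have d2nn: "d2 \<ge> 0" unfolding d2_def by simp
    have Ann: "p / c t + s t * (\<Sum>k=1..p. lam t k) \<ge> 0"
      using ct s_nonneg lamf by (intro add_nonneg_nonneg mult_nonneg_nonneg sum_nonneg) auto
    have "(sqrt d2)^2 \<le> 4 * (norm (g t))^2 / m^2 + 2 * (p / c t + s t * (\<Sum>k=1..p. lam t k)) / m"
      by (rule quad_bound[OF m_pos Ann norm_ge_zero real_sqrt_ge_zero[OF d2nn]]) (use main d2nn in simp)
    then show ?thesis using d2nn unfolding d2_def x_def y_def by (simp add: power2_norm_eq_inner)
  qed
  have lim_g: "((\<lambda>t. g t \<bullet> g t) \<longlongrightarrow> 0) at_top"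
  proof (rule tendsto_sandwich[of "\<lambda>t. 0" _ _ "\<lambda>t. exp (- (2 * \<sigma>) * t) * (g 0 \<bullet> g 0)"])
    show "\<forall>\<^sub>F t in at_top. 0 \<le> g t \<bullet> g t" by simp
    show "\<forall>\<^sub>F t in at_top. g t \<bullet> g t \<le> exp (- (2 * \<sigma>) * t) * (g 0 \<bullet> g 0)"
      using eventually_ge_at_top[of 0] by eventually_elim (rule decay)
    show "((\<lambda>t. exp (- (2 * \<sigma>) * t) * (g 0 \<bullet> g 0)) \<longlongrightarrow> 0) at_top"
      using tendsto_mult_left_zero[OF exp_decay_lim[OF sigma_pos], of "g 0 \<bullet> g 0"] by simp
  qed simp
  have lim_c: "((\<lambda>t. p / c t) \<longlongrightarrow> 0) at_top"
    by (rule tendsto_divide_0[OF tendsto_const filterlim_at_top_imp_at_infinity[OF c_lim]])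
  have lim_s: "((\<lambda>t. s t * (\<Sum>k=1..p. lam t k)) \<longlongrightarrow> 0) at_top"
  proof -
    have "((\<lambda>t. \<Sum>k=1..p. s0 * (lam t k * exp (- \<alpha> * t))) \<longlongrightarrow> 0) at_top"
    proof -
      have "((\<lambda>t. s0 * (lam t k * exp (- \<alpha> * t))) \<longlongrightarrow> 0) at_top" if "k \<in> {1..p}" for k
        using A3 alpha_pos that by (intro tendsto_mult_right_zero) blast
      then have "((\<lambda>t. \<Sum>k=1..p. s0 * (lam t k * exp (- \<alpha> * t))) \<longlongrightarrow> (\<Sum>k=1..p. 0)) at_top"
        by (intro tendsto_sum) blast
      then show ?thesis by simp
    qed
    moreover have "(\<lambda>t. s t * (\<Sum>k=1..p. lam t k)) = (\<lambda>t. \<Sum>k=1..p. s0 * (lam t k * exp (- \<alpha> * t)))"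
      by (auto simp: s_eq sum_distrib_left algebra_simps)
    ultimately show ?thesis by simp
  qed
  have lim_d: "((\<lambda>t. (z t - xs t) \<bullet> (z t - xs t)) \<longlongrightarrow> 0) at_top"
  proof (rule tendsto_sandwich[of "\<lambda>t. 0" _ _ "\<lambda>t. 4 * (g t \<bullet> g t) / m^2 + 2 * (p / c t + s t * (\<Sum>k=1..p. lam t k)) / m"])
    show "\<forall>\<^sub>F t in at_top. 0 \<le> (z t - xs t) \<bullet> (z t - xs t)" by simp
    show "\<forall>\<^sub>F t in at_top. (z t - xs t) \<bullet> (z t - xs t) \<le> 4 * (g t \<bullet> g t) / m^2 + 2 * (p / c t + s t * (\<Sum>k=1..p. lam t k)) / m"
      using eventually_ge_at_top[of 0] by eventually_elim (rule bound)
    have "((\<lambda>t. 4 * (g t \<bullet> g t) / m^2 + 2 * (p / c t + s t * (\<Sum>k=1..p. lam t k)) / m) \<longlongrightarrow>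
           4 * 0 / m^2 + 2 * (0 + 0) / m) at_top"
      by (intro tendsto_intros lim_g lim_c lim_s) (use m_pos in auto)
    then show "((\<lambda>t. 4 * (g t \<bullet> g t) / m^2 + 2 * (p / c t + s t * (\<Sum>k=1..p. lam t k)) / m) \<longlongrightarrow> 0) at_top"
      by simp
  qed simp
  have "((\<lambda>t. norm (z t - xs t)) \<longlongrightarrow> 0) at_top"
    using tendsto_real_sqrt[OF lim_d] by (simp add: norm_eq_sqrt_inner)
  then show ?thesis by (simp add: tendsto_norm_zero_iff)
qed

thm_deps theorem1

end
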